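(* Let $\langle S\mid R\rangle\cong\mathbb{Z}^n$ be a 3-presentation such that $|S|$ is minimal among all 3-presentations of $\mathbb{Z}^n$, and fix an isomorphism $\phi:\langle S\mid R\rangle\to\mathbb{Z}^n$. Then for each $r\in R$ whose normal form is not the empty word, the normal form of $r$ is $g^ah^bi^c$ with $g,h,i\in S$ distinct and $a,b,c\neq0$, and $\dim r=2$.
   Context: A 3-presentation of a group $G$ is a group presentation $\langle S\mid R\rangle\cong G$ (with $S,R$ finite) in which each relation is the empty word, $g^a$, $g^ah^b$, or $g^ah^bi^c$ with $g,h,i\in S$ and $a,b,c\in\mathbb{Z}$. Such a word is in normal form if its generators are distinct and its exponents nonzero; every relation $r$ is conjugate in the free group on $S$ to a normal-form word $w$, unique up to cyclic permutation, and we write $r\leadsto w$. Given the isomorphism $\phi$, for $S'\subseteq S$ let $\dim S'=\dim\operatorname{span}_{\mathbb{R}}\{\phi(g):g\in S'\}$, viewing $\phi(g)\in\mathbb{Z}^n\subseteq\mathbb{R}^n$; for $r\in R$ with $r\leadsto\prod_i g_i^{a_i}$, $\dim r=\dim\{g_i\}$. *)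

theory Defs
  imports "HOL-Analysis.Analysis"
begin

text \<open>Letters of the free group on generators of type 'g: (g, False) is g, (g, True) is g^-1.
  A syllable (g, a) stands for g^a; a syllable word is a list of syllables.\<close>

type_synonym 'g letter = "'g \<times> bool"
type_synonym 'g sylword = "('g \<times> int) list"

definition inv_letter :: "'g letter \<Rightarrow> 'g letter" where
  "inv_letter x = (fst x, \<not> snd x)"

definition inv_word :: "'g letter list \<Rightarrow> 'g letter list" where
  "inv_word u = rev (map inv_letter u)"

definition expand_syl :: "'g \<times> int \<Rightarrow> 'g letter list" where
  "expand_syl s = replicate (nat \<bar>snd s\<bar>) (fst s, snd s < 0)"

definition expand :: "'g sylword \<Rightarrow> 'g letter list" where
  "expand w = concat (map expand_syl w)"

definition free_step :: "'g letter list \<Rightarrow> 'g letter list \<Rightarrow> bool" where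
  "free_step u v \<longleftrightarrow> (\<exists>xs ys x. u = xs @ [x, inv_letter x] @ ys \<and> v = xs @ ys)"

definition free_eq :: "'g letter list \<Rightarrow> 'g letter list \<Rightarrow> bool" where
  "free_eq = equivclp free_step"

definition free_conj :: "'g letter list \<Rightarrow> 'g letter list \<Rightarrow> bool" where
  "free_conj u v \<longleftrightarrow> (\<exists>c. free_eq (c @ u @ inv_word c) v)"

definition normal_form :: "'g sylword \<Rightarrow> bool" where
  "normal_form w \<longleftrightarrow> distinct (map fst w) \<and> (\<forall>s\<in>set w. snd s \<noteq> 0)"

definition nf_of :: "'g sylword \<Rightarrow> 'g sylword \<Rightarrow> bool" where
  "nf_of r w \<longleftrightarrow> normal_form w \<and> free_conj (expand r) (expand w)"

definition pres_step :: "'g set \<Rightarrow> 'g sylword set \<Rightarrow> 'g letter list \<Rightarrow> 'g letter list \<Rightarrow> bool" where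
  "pres_step S R u v \<longleftrightarrow>
     (\<exists>xs ys x. fst x \<in> S \<and> u = xs @ [x, inv_letter x] @ ys \<and> v = xs @ ys) \<or>
     (\<exists>xs ys r. r \<in> R \<and> u = xs @ expand r @ ys \<and> v = xs @ ys)"

definition pres_eq :: "'g set \<Rightarrow> 'g sylword set \<Rightarrow> 'g letter list \<Rightarrow> 'g letter list \<Rightarrow> bool" where
  "pres_eq S R = equivclp (pres_step S R)"

definition ev :: "('g \<Rightarrow> int^'n) \<Rightarrow> 'g letter list \<Rightarrow> int^'n" where
  "ev phi u = sum_list (map (\<lambda>x. if snd x then - phi (fst x) else phi (fst x)) u)"

text \<open>phi (on generators) induces an isomorphism \<langle>S | R\<rangle> \<rightarrow> Z^n: the induced map is well defined,
  injective and surjective.\<close>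
definition presents_iso :: "'g set \<Rightarrow> 'g sylword set \<Rightarrow> ('g \<Rightarrow> int^'n) \<Rightarrow> bool" where
  "presents_iso S R phi \<longleftrightarrow>
     (\<forall>u. set (map fst u) \<subseteq> S \<longrightarrow> (ev phi u = 0 \<longleftrightarrow> pres_eq S R u [])) \<and>
     (\<forall>v. \<exists>u. set (map fst u) \<subseteq> S \<and> ev phi u = v)"

definition three_presentation :: "'g set \<Rightarrow> 'g sylword set \<Rightarrow> bool" where
  "three_presentation S R \<longleftrightarrow> finite S \<and> finite R \<and>
     (\<forall>r\<in>R. length r \<le> 3 \<and> set (map fst r) \<subseteq> S)"

definition real_vec :: "int^'n \<Rightarrow> real^'n" where
  "real_vec v = (\<chi> i. real_of_int (v $ i))"

definition gen_dim :: "('g \<Rightarrow> int^'n) \<Rightarrow> 'g set \<Rightarrow> nat" where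
  "gen_dim phi T = dim ((\<lambda>g. real_vec (phi g)) ` T)"

end

theory Submission
  imports Defs
begin


definition lsub :: "('g \<Rightarrow> 'h letter list) \<Rightarrow> 'g letter list \<Rightarrow> 'h letter list" where
  "lsub F u = concat (map (\<lambda>x. if snd x then inv_word (F (fst x)) else F (fst x)) u)"

lemma lsub_Nil[simp]: "lsub F [] = []" by (simp add: lsub_def)
lemma lsub_Cons[simp]: "lsub F (x # u) = (if snd x then inv_word (F (fst x)) else F (fst x)) @ lsub F u"
  by (simp add: lsub_def)
lemma lsub_append[simp]: "lsub F (u @ v) = lsub F u @ lsub F v" by (simp add: lsub_def)

lemma inv_letter_inv[simp]: "inv_letter (inv_letter x) = x" by (simp add: inv_letter_def)
lemma fst_inv_letter[simp]: "fst (inv_letter x) = fst x" by (simp add: inv_letter_def)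
lemma snd_inv_letter[simp]: "snd (inv_letter x) = (\<not> snd x)" by (simp add: inv_letter_def)
lemma inv_word_Nil[simp]: "inv_word [] = []" by (simp add: inv_word_def)
lemma inv_word_Cons[simp]: "inv_word (x # u) = inv_word u @ [inv_letter x]" by (simp add: inv_word_def)
lemma inv_word_append[simp]: "inv_word (u @ v) = inv_word v @ inv_word u" by (simp add: inv_word_def)
lemma inv_word_inv[simp]: "inv_word (inv_word u) = u" by (simp add: inv_word_def rev_map comp_def)
lemma map_fst_inv_word[simp]: "map fst (inv_word u) = rev (map fst u)" by (simp add: inv_word_def rev_map o_def)
lemma inv_word_fst: "set (map fst (inv_word u)) = set (map fst u)" by simp
lemma inv_word_replicate[simp]: "inv_word (replicate n x) = replicate n (inv_letter x)"
  by (simp add: inv_word_def)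

lemma lsub_inv: "lsub F (inv_word u) = inv_word (lsub F u)"
  by (induction u) auto

lemma lsub_lsub: "lsub F (lsub G u) = lsub (\<lambda>h. lsub F (G h)) u"
  by (induction u) (auto simp: lsub_inv)

lemma lsub_concat: "lsub F (concat xs) = concat (map (lsub F) xs)"
  by (induction xs) auto

lemma lsub_fst: "set (map fst (lsub F u)) \<subseteq> (\<Union>x\<in>set u. set (map fst (F (fst x))))"
  by (induction u) (auto simp del: set_map simp: set_map[symmetric])

lemma expand_fst: "set (map fst (expand r)) \<subseteq> set (map fst r)"
  by (auto simp: expand_def expand_syl_def) force

lemma expand_syl_fst: "set (map fst (expand_syl (t, a))) \<subseteq> {t}"
  by (auto simp: expand_syl_def)

lemma ev_Nil[simp]: "ev phi [] = 0" by (simp add: ev_def)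
lemma ev_Cons[simp]: "ev phi (x # u) = (if snd x then - phi (fst x) else phi (fst x)) + ev phi u"
  by (simp add: ev_def)
lemma ev_append[simp]: "ev phi (u @ v) = ev phi u + ev phi v" by (simp add: ev_def)
lemma ev_inv[simp]: "ev phi (inv_word u) = - ev phi u"
  by (induction u) (auto simp: inv_letter_def)
lemma ev_lsub: "ev psi (lsub F u) = ev (\<lambda>z. ev psi (F z)) u"
  by (induction u) auto
lemma ev_cong: "(\<And>x. x \<in> set u \<Longrightarrow> phi (fst x) = psi (fst x)) \<Longrightarrow> ev phi u = ev psi u"
  by (induction u) auto

lemma ev_comp: "ev phi u $ i = sum_list (map (\<lambda>x. if snd x then - phi (fst x) $ i else phi (fst x) $ i) u)"
  by (induction u) auto

lemma ev_replicate: "ev phi (replicate n x) $ i = of_nat n * (if snd x then - phi (fst x) $ i else phi (fst x) $ i)"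
  by (induction n) (auto simp: algebra_simps)

lemma ev_expand_syl: "ev phi (expand_syl s) $ i = snd s * phi (fst s) $ i"
  by (auto simp: expand_syl_def ev_replicate)

lemma ev_concat: "ev phi (concat xs) = sum_list (map (ev phi) xs)"
  by (induction xs) auto

lemma sum_list_comp: "(sum_list xs :: 'a::comm_monoid_add ^'n) $ i = sum_list (map (\<lambda>v. v $ i) xs)"
  by (induction xs) auto

lemma ev_expand: "ev phi (expand w) $ i = (\<Sum>s\<leftarrow>w. snd s * phi (fst s) $ i)"
  by (simp add: expand_def ev_concat sum_list_comp o_def ev_expand_syl)

lemma equivclp_map:
  assumes "equivclp P a b" and "\<And>x y. P x y \<Longrightarrow> equivclp Q (f x) (f y)"
  shows "equivclp Q (f a) (f b)"
  using assms(1)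
proof (induction rule: equivclp_induct)
  case base then show ?case by simp
next
  case (step y z)
  from step.hyps(2) have "equivclp Q (f y) (f z)"
    by (metis assms(2) equivclp_sym)
  with step.IH show ?case by (rule equivclp_trans)
qed

lemma pres_step_congr: "pres_step S R u v \<Longrightarrow> pres_step S R (xs @ u @ ys) (xs @ v @ ys)"
proof -
  assume "pres_step S R u v"
  then consider (a) as bs x where "fst x \<in> S" "u = as @ [x, inv_letter x] @ bs" "v = as @ bs"
    | (b) as bs r where "r \<in> R" "u = as @ expand r @ bs" "v = as @ bs"
    unfolding pres_step_def by blast
  then show ?thesis
  proof cases
    case a
    then show ?thesis unfolding pres_step_def
      by (intro disjI1 exI[of _ "xs @ as"] exI[of _ "bs @ ys"] exI[of _ x]) auto
  next
    case b
    then show ?thesis unfolding pres_step_def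
      by (intro disjI2 exI[of _ "xs @ as"] exI[of _ "bs @ ys"] exI[of _ r]) auto
  qed
qed

lemma pres_eq_congr: "pres_eq S R u v \<Longrightarrow> pres_eq S R (xs @ u @ ys) (xs @ v @ ys)"
  unfolding pres_eq_def
  using equivclp_map[of "pres_step S R" u v "pres_step S R" "\<lambda>u. xs @ u @ ys"]
  by (auto intro: pres_step_congr r_into_equivclp)

lemma pres_eq_refl[simp]: "pres_eq S R u u" by (simp add: pres_eq_def)
lemma pres_eq_sym: "pres_eq S R u v \<Longrightarrow> pres_eq S R v u"
  by (simp add: pres_eq_def equivclp_sym)
lemma pres_eq_trans: "pres_eq S R u v \<Longrightarrow> pres_eq S R v w \<Longrightarrow> pres_eq S R u w"
  unfolding pres_eq_def by (rule equivclp_trans)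

lemma pres_eq_step: "pres_step S R u v \<Longrightarrow> pres_eq S R u v"
  by (simp add: pres_eq_def r_into_equivclp)

lemma pres_eq_rel: "r \<in> R \<Longrightarrow> pres_eq S R (xs @ expand r @ ys) (xs @ ys)"
  by (rule pres_eq_step) (unfold pres_step_def, blast)

lemma pres_eq_free:
  "set (map fst y) \<subseteq> S \<Longrightarrow> pres_eq S R (xs @ y @ inv_word y @ ys) (xs @ ys)"
proof (induction y arbitrary: xs ys)
  case Nil then show ?case by simp
next
  case (Cons a y)
  have 1: "pres_eq S R ((xs @ [a]) @ y @ inv_word y @ ([inv_letter a] @ ys)) ((xs @ [a]) @ ([inv_letter a] @ ys))"
    using Cons.IH[of "xs @ [a]" "[inv_letter a] @ ys"] Cons.prems by simp
  have 2: "pres_eq S R (xs @ [a, inv_letter a] @ ys) (xs @ ys)"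
    using Cons.prems unfolding pres_step_def
    by (intro pres_eq_step) (unfold pres_step_def, rule disjI1, rule exI[of _ xs], rule exI[of _ ys], rule exI[of _ a], simp)
  from pres_eq_trans[OF 1] 2 show ?case by simp
qed

lemma pres_eq_congr2: "pres_eq S R u v \<Longrightarrow> pres_eq S R u' v' \<Longrightarrow> pres_eq S R (u @ u') (v @ v')"
  using pres_eq_congr[of S R u v "[]" u'] pres_eq_congr[of S R u' v' v "[]"]
  by (auto intro: pres_eq_trans)

lemma pres_eq_inv:
  assumes "pres_eq S R a b" "set (map fst a) \<subseteq> S" "set (map fst b) \<subseteq> S"
  shows "pres_eq S R (inv_word a) (inv_word b)"
proof -
  have 1: "pres_eq S R (inv_word a @ b @ inv_word b @ []) (inv_word a @ [])"
    using assms(3) by (rule pres_eq_free)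
  have 2: "pres_eq S R (inv_word a @ b @ inv_word b) (inv_word a @ a @ inv_word b)"
    using pres_eq_congr[OF pres_eq_sym[OF assms(1)]] by blast
  have 3: "pres_eq S R ([] @ inv_word a @ inv_word (inv_word a) @ inv_word b) ([] @ inv_word b)"
    using assms(2) by (intro pres_eq_free) simp
  from 1 2 3 show ?thesis
    by (metis append_Nil append_Nil2 inv_word_inv pres_eq_sym pres_eq_trans)
qed

lemma pres_eq_lsub:
  assumes "pres_eq S R a b"
    and "\<And>z. z \<in> S \<Longrightarrow> set (map fst (F z)) \<subseteq> S'"
    and "\<And>r. r \<in> R \<Longrightarrow> pres_eq S' R' (lsub F (expand r)) []"
  shows "pres_eq S' R' (lsub F a) (lsub F b)"
  using assms(1) unfolding pres_eq_def
proof (rule equivclp_map)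
  fix u v assume "pres_step S R u v"
  then consider (a) as bs x where "fst x \<in> S" "u = as @ [x, inv_letter x] @ bs" "v = as @ bs"
    | (b) as bs r where "r \<in> R" "u = as @ expand r @ bs" "v = as @ bs"
    unfolding pres_step_def by blast
  then have "pres_eq S' R' (lsub F u) (lsub F v)"
  proof cases
    case a
    show ?thesis
    proof (cases "snd x")
      case True
      have "pres_eq S' R' (lsub F as @ inv_word (F (fst x)) @ inv_word (inv_word (F (fst x))) @ lsub F bs) (lsub F as @ lsub F bs)"
        using a(1) assms(2) by (intro pres_eq_free) simp
      then show ?thesis using a True by simp
    next
      case False
      have "pres_eq S' R' (lsub F as @ F (fst x) @ inv_word (F (fst x)) @ lsub F bs) (lsub F as @ lsub F bs)"
        using a(1) assms(2) by (intro pres_eq_free) simp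
      then show ?thesis using a False by simp
    qed
  next
    case b
    show ?thesis using pres_eq_congr[OF assms(3)[OF b(1)], of "lsub F as" "lsub F bs"] b by simp
  qed
  then show "equivclp (pres_step S' R') (lsub F u) (lsub F v)" by (simp add: pres_eq_def)
qed

lemma pres_eq_replace:
  assumes "set (map fst u) \<subseteq> S"
    and "\<And>h. h \<in> S \<Longrightarrow> pres_eq S R (H h) [(h, False)] \<and> set (map fst (H h)) \<subseteq> S"
  shows "pres_eq S R (lsub H u) u"
  using assms(1)
proof (induction u)
  case Nil then show ?case by simp
next
  case (Cons x u)
  obtain h b where x: "x = (h, b)" by (cases x)
  have hS: "h \<in> S" using Cons.prems x by auto
  have X: "pres_eq S R (if snd x then inv_word (H h) else H h) [x]"
  proof (cases b)
    case True
    have "pres_eq S R (inv_word (H h)) (inv_word [(h, False)])"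
      using assms(2)[OF hS] hS by (intro pres_eq_inv) auto
    then show ?thesis using True x by (simp add: inv_letter_def)
  next
    case False then show ?thesis using assms(2)[OF hS] x by simp
  qed
  have "pres_eq S R (lsub H u) u" using Cons by auto
  from pres_eq_congr2[OF X this] show ?case using x by (cases b) auto
qed

lemma ev_pres_eq:
  assumes "pres_eq S R u v" and "\<And>r. r \<in> R \<Longrightarrow> ev phi (expand r) = 0"
  shows "ev phi u = ev phi v"
  using assms(1) unfolding pres_eq_def
proof (induction rule: equivclp_induct)
  case base then show ?case by simp
next
  case (step y z)
  have "ev phi y = ev phi z" if "pres_step S R a b" "{a,b} = {y,z}" for a b
    using that(1) unfolding pres_step_def using assms(2) that(2)
    by (auto simp: inv_letter_def doubleton_eq_iff)
  then have "ev phi y = ev phi z" using step.hyps(2) by blast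
  then show ?case using step.IH by simp
qed

lemma lsub_replicate: "lsub F (replicate n x) = concat (replicate n (if snd x then inv_word (F (fst x)) else F (fst x)))"
  by (induction n) auto

lemma concat_replicate_replicate: "concat (replicate n (replicate m y)) = replicate (n * m) y"
  by (induction n) (auto simp: replicate_add)

lemma lsub_expand_syl:
  "lsub (\<lambda>z. expand_syl (f z, k z)) (expand_syl (z, a)) = expand_syl (f z, k z * a)"
proof -
  have n: "nat \<bar>k z * a\<bar> = nat \<bar>a\<bar> * nat \<bar>k z\<bar>" by (simp add: abs_mult nat_mult_distrib)
  show ?thesis
  proof (cases "a < 0")
    case True
    then show ?thesis
      by (auto simp: expand_syl_def lsub_replicate concat_replicate_replicate n inv_letter_def
          mult_less_0_iff intro!: replicate_eq_replicate[THEN iffD2])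
  next
    case False
    then show ?thesis
      by (auto simp: expand_syl_def lsub_replicate concat_replicate_replicate n inv_letter_def
          mult_less_0_iff intro!: replicate_eq_replicate[THEN iffD2])
  qed
qed

lemma lsub_expand:
  "lsub (\<lambda>z. expand_syl (f z, k z)) (expand r) = expand (map (\<lambda>(z, a). (f z, k z * a)) r)"
  by (simp add: expand_def lsub_concat o_def case_prod_beta lsub_expand_syl[symmetric])

lemma pres_eq_syl_add:
  assumes t: "t \<in> S"
  shows "pres_eq S R (expand_syl (t, a) @ expand_syl (t, b)) (expand_syl (t, a + b))"
proof -
  let ?p = "(t, False)" and ?q = "(t, True)"
  have pq: "inv_letter ?p = ?q" "inv_letter ?q = ?p" by (auto simp: inv_letter_def)
  have fr: "pres_eq S R (xs @ replicate c x @ replicate c (inv_letter x) @ ys) (xs @ ys)" if "fst x = t" for xs ys c x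
    using pres_eq_free[of "replicate c x" S R xs ys] that t by (cases "c = 0") auto
  consider "a \<ge> 0" "b \<ge> 0" | "a < 0" "b < 0" | "a \<ge> 0" "b < 0" | "a < 0" "b \<ge> 0" by linarith
  then show ?thesis
  proof cases
    case 1
    then have "expand_syl (t, a) @ expand_syl (t, b) = expand_syl (t, a + b)"
      by (simp add: expand_syl_def replicate_add[symmetric] nat_add_distrib)
    then show ?thesis by simp
  next
    case 2
    then have "expand_syl (t, a) @ expand_syl (t, b) = expand_syl (t, a + b)"
      by (simp add: expand_syl_def replicate_add[symmetric] nat_add_distrib[symmetric])
    then show ?thesis by simp
  next
    case 3
    define A where "A = nat a"
    define C where "C = nat (- b)"
    have e: "expand_syl (t, a) = replicate A ?p" "expand_syl (t, b) = replicate C ?q"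
      using 3 by (auto simp: expand_syl_def A_def C_def)
    show ?thesis
    proof (cases "A \<ge> C")
      case True
      have "replicate A ?p = replicate (A - C) ?p @ replicate C ?p"
        using True by (simp add: replicate_add[symmetric])
      moreover have "expand_syl (t, a + b) = replicate (A - C) ?p"
        using 3 True by (auto simp: expand_syl_def A_def C_def nat_diff_distrib)
      ultimately show ?thesis using fr[of ?p "replicate (A - C) ?p" C "[]"] e pq by simp
    next
      case False
      have "replicate C ?q = replicate A ?q @ replicate (C - A) ?q"
        using False by (simp add: replicate_add[symmetric])
      moreover have "expand_syl (t, a + b) = replicate (C - A) ?q"
        using 3 False by (auto simp: expand_syl_def A_def C_def nat_diff_distrib)
      ultimately show ?thesis using fr[of ?p "[]" A "replicate (C - A) ?q"] e pq by simp
    qed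
  next
    case 4
    define A where "A = nat (- a)"
    define C where "C = nat b"
    have e: "expand_syl (t, a) = replicate A ?q" "expand_syl (t, b) = replicate C ?p"
      using 4 by (auto simp: expand_syl_def A_def C_def)
    show ?thesis
    proof (cases "A \<ge> C")
      case True
      have "replicate A ?q = replicate (A - C) ?q @ replicate C ?q"
        using True by (simp add: replicate_add[symmetric])
      moreover have "expand_syl (t, a + b) = replicate (A - C) ?q"
        using 4 True by (auto simp: expand_syl_def A_def C_def nat_diff_distrib)
      ultimately show ?thesis using fr[of ?q "replicate (A - C) ?q" C "[]"] e pq by simp
    next
      case False
      have "replicate C ?p = replicate A ?p @ replicate (C - A) ?p"
        using False by (simp add: replicate_add[symmetric])
      moreover have "expand_syl (t, a + b) = replicate (C - A) ?p"
        using 4 False by (auto simp: expand_syl_def A_def C_def nat_diff_distrib)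
      ultimately show ?thesis using fr[of ?q "[]" A "replicate (C - A) ?p"] e pq by simp
    qed
  qed
qed

lemma pres_eq_syl_concat:
  assumes t: "t \<in> S"
  shows "pres_eq S R (concat (map (\<lambda>z. expand_syl (t, c z)) l)) (expand_syl (t, sum_list (map c l)))"
proof (induction l)
  case Nil then show ?case by (simp add: expand_syl_def)
next
  case (Cons z l)
  have "pres_eq S R (expand_syl (t, c z) @ concat (map (\<lambda>z. expand_syl (t, c z)) l))
     (expand_syl (t, c z) @ expand_syl (t, sum_list (map c l)))"
    using pres_eq_congr[OF Cons.IH, of "expand_syl (t, c z)" "[]"] by simp
  then show ?case using pres_eq_syl_add[OF t, where a="c z" and b="sum_list (map c l)" and R=R]
    by (auto intro: pres_eq_trans)
qed

lemma iso_rel_ev: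
  assumes tp: "three_presentation S R" and iso: "presents_iso S R phi" and r: "r \<in> R"
  shows "ev phi (expand r) = 0"
proof -
  have "set (map fst (expand r)) \<subseteq> S"
    using expand_fst[of r] tp r by (auto simp: three_presentation_def)
  moreover have "pres_eq S R (expand r) []"
    using pres_eq_rel[OF r, of S "[]" "[]"] by simp
  ultimately show ?thesis using iso unfolding presents_iso_def by blast
qed

lemma merge:
  fixes S :: "'g set" and R :: "'g sylword set" and phi :: "'g \<Rightarrow> int^'n"
  assumes tp: "three_presentation S R" and iso: "presents_iso S R phi"
    and T: "T \<subseteq> S" "g0 \<in> T" "g1 \<in> T" "g0 \<noteq> g1"
    and mv: "\<And>z i. z \<in> T \<Longrightarrow> phi z $ i = m z * v $ i"
    and mx: "(\<Sum>z\<in>T. m z * x z) = 1"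
  shows "\<exists>(S'::nat set) R' (phi' :: nat \<Rightarrow> int^'n).
           three_presentation S' R' \<and> presents_iso S' R' phi' \<and> card S' < card S"
proof -
  have finS: "finite S" and finR: "finite R" and Rl: "\<And>r. r \<in> R \<Longrightarrow> length r \<le> 3 \<and> set (map fst r) \<subseteq> S"
    using tp by (auto simp: three_presentation_def)
  have finT: "finite T" using T(1) finS finite_subset by blast
  obtain e :: "'g \<Rightarrow> nat" where e: "inj_on e S"
    using finite_imp_inj_to_nat_seg[OF finS] by blast
  define f where "f z = e (if z \<in> T then g0 else z)" for z
  define k where "k z = (if z \<in> T then m z else 1)" for z
  define F where "F z = expand_syl (f z, k z)" for z
  define S' where "S' = f ` S"
  define R' where "R' = (\<lambda>r. map (\<lambda>(z, a). (f z, k z * a)) r) ` R"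
  define phi' where "phi' h = (if h = e g0 then v else phi (inv_into S e h))" for h
  obtain Tl where Tl: "set Tl = T" "distinct Tl" using finite_distinct_list[OF finT] by blast
  define wT where "wT = concat (map (\<lambda>z. expand_syl (z, x z)) Tl)"
  define G where "G h = (if h = e g0 then wT else [(inv_into S e h, False)])" for h
  have g0S: "g0 \<in> S" using T by auto
  have fnT: "f z = e z" "e z \<noteq> e g0" if "z \<in> S" "z \<notin> T" for z
    using that T e by (auto simp: f_def inj_on_def)
  have F1: "ev phi' (F z) = phi z" if "z \<in> S" for z
  proof (cases "z \<in> T")
    case True
    then show ?thesis using mv[OF True]
      by (simp add: vec_eq_iff F_def ev_expand_syl f_def k_def phi'_def)
  next
    case False
    then show ?thesis using fnT[OF that False] that e
      by (simp add: vec_eq_iff F_def ev_expand_syl k_def phi'_def)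
  qed
  have F2: "set (map fst (F z)) \<subseteq> S'" if "z \<in> S" for z
    using expand_syl_fst[of "f z" "k z"] that by (auto simp: F_def S'_def)
  have Fr: "lsub F (expand r) = expand (map (\<lambda>(z, a). (f z, k z * a)) r)" for r
    unfolding F_def by (rule lsub_expand)
  have "S' = e ` ((S - T) \<union> {g0})"
    using T unfolding S'_def f_def by (auto simp: image_iff) (metis DiffI)
  then have "card S' \<le> card ((S - T) \<union> {g0})" using finS by (metis card_image_le finite.emptyI finite.insertI finite_Diff finite_UnI)
  also have "\<dots> \<le> card (S - T) + 1" using finS by (simp add: card_insert_le_m1 card_Un_le)
  also have "card (S - T) = card S - card T" using T(1) finT by (simp add: card_Diff_subset)
  also have "card T \<ge> 2"
  proof -
    have "card {g0, g1} \<le> card T" using T finT by (intro card_mono) auto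
    then show ?thesis using T(4) by simp
  qed
  moreover have "card T \<le> card S" using T(1) finS by (simp add: card_mono)
  ultimately have card: "card S' < card S" by linarith
  have tp': "three_presentation S' R'"
    unfolding three_presentation_def
  proof (intro conjI ballI)
    show "finite S'" using finS by (simp add: S'_def)
    show "finite R'" using finR by (simp add: R'_def)
  next
    fix r' assume "r' \<in> R'"
    then obtain r where r: "r \<in> R" "r' = map (\<lambda>(z, a). (f z, k z * a)) r" by (auto simp: R'_def)
    show "length r' \<le> 3" using Rl[OF r(1)] r(2) by simp
    show "set (map fst r') \<subseteq> S'" using Rl[OF r(1)] r(2) by (auto simp: S'_def)
  qed
  have evR: "ev phi (expand r) = 0" if "r \<in> R" for r using iso_rel_ev[OF tp iso that] .
  have evR': "ev phi' (expand r') = 0" if r'R: "r' \<in> R'" for r'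
  proof -
    obtain r where r: "r \<in> R" "r' = map (\<lambda>(z, a). (f z, k z * a)) r" using r'R by (auto simp: R'_def)
    have "ev phi' (expand r') = ev (\<lambda>z. ev phi' (F z)) (expand r)"
      using r Fr[of r] ev_lsub[of phi' F "expand r"] by simp
    also have "\<dots> = ev phi (expand r)"
      using expand_fst[of r] Rl[OF r(1)] by (intro ev_cong) (auto intro!: F1)
    finally show ?thesis using evR[OF r(1)] by simp
  qed
  have Fpres: "pres_eq S' R' (lsub F (expand r)) []" if "r \<in> R" for r
    using pres_eq_rel[of "map (\<lambda>(z, a). (f z, k z * a)) r" R' S' "[]" "[]"] that Fr[of r]
    by (simp add: R'_def)
  have G1: "set (map fst (G h)) \<subseteq> S \<and> ev phi (G h) = phi' h \<and>
     pres_eq S' R' (lsub F (G h)) [(h, False)] \<and> set (map fst (lsub F (G h))) \<subseteq> S'" if h: "h \<in> S'" for h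
  proof (cases "h = e g0")
    case True
    have a: "set (map fst wT) \<subseteq> S"
      using T(1) Tl expand_syl_fst by (force simp: wT_def expand_def)
    have "ev phi wT $ i = v $ i" for i
    proof -
      have "ev phi wT $ i = (\<Sum>z\<leftarrow>Tl. x z * phi z $ i)"
        by (simp add: wT_def ev_concat sum_list_comp o_def ev_expand_syl)
      also have "\<dots> = (\<Sum>z\<in>T. x z * phi z $ i)" using Tl by (simp add: sum_list_distinct_conv_sum_set)
      also have "\<dots> = (\<Sum>z\<in>T. (m z * x z) * v $ i)"
        by (rule sum.cong) (simp_all add: mv)
      also have "\<dots> = (\<Sum>z\<in>T. m z * x z) * v $ i"
        by (simp add: sum_distrib_right)
      finally show ?thesis using mx by simp
    qed
    then have b: "ev phi wT = v" by (simp add: vec_eq_iff)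
    have c: "lsub F wT = concat (map (\<lambda>z. expand_syl (e g0, m z * x z)) Tl)"
      unfolding wT_def lsub_concat map_map o_def F_def
      using Tl by (intro arg_cong[where f=concat] map_cong refl) (simp add: lsub_expand_syl f_def k_def)
    have "e g0 \<in> S'" using g0S T by (auto simp: S'_def f_def)
    then have "pres_eq S' R' (lsub F wT) (expand_syl (e g0, sum_list (map (\<lambda>z. m z * x z) Tl)))"
      unfolding c by (rule pres_eq_syl_concat)
    moreover have "sum_list (map (\<lambda>z. m z * x z) Tl) = 1" using Tl mx by (simp add: sum_list_distinct_conv_sum_set)
    moreover have "set (map fst (lsub F wT)) \<subseteq> S'" unfolding c using \<open>e g0 \<in> S'\<close>
      by (force simp: expand_syl_def)
    ultimately show ?thesis using True a b by (simp add: G_def phi'_def expand_syl_def)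
  next
    case False
    obtain z where z: "z \<in> S" "h = f z" using h by (auto simp: S'_def)
    have zT: "z \<notin> T" using z False by (auto simp: f_def)
    have hz: "h = e z" "inv_into S e h = z" using fnT[OF z(1) zT] z e by auto
    show ?thesis using False hz z e zT h
      by (simp add: G_def phi'_def F_def k_def fnT[OF z(1) zT] expand_syl_def)
  qed
  have G1a: "set (map fst (G h)) \<subseteq> S" and G1b: "ev phi (G h) = phi' h"
    and G1c: "pres_eq S' R' (lsub F (G h)) [(h, False)]" and G1d: "set (map fst (lsub F (G h))) \<subseteq> S'"
    if "h \<in> S'" for h using G1[OF that] by blast+
  have iso': "presents_iso S' R' phi'"
    unfolding presents_iso_def
  proof (intro conjI allI impI)
    fix w :: "int^'n"
    obtain u where u: "set (map fst u) \<subseteq> S" "ev phi u = w" using iso unfolding presents_iso_def by blast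
    have "(\<Union>x\<in>set u. set (map fst (F (fst x)))) \<subseteq> S'" using F2 u(1) by auto
    then have "set (map fst (lsub F u)) \<subseteq> S'" using lsub_fst[of F u] by (rule order_trans[rotated])
    moreover have "ev phi' (lsub F u) = ev (\<lambda>z. ev phi' (F z)) u" by (rule ev_lsub)
    moreover have "\<dots> = ev phi u" by (rule ev_cong) (use u(1) F1 in auto)
    ultimately show "\<exists>u. set (map fst u) \<subseteq> S' \<and> ev phi' u = w" using u(2) by metis
  next
    fix u :: "nat letter list" assume uS: "set (map fst u) \<subseteq> S'"
    show "(ev phi' u = 0) = pres_eq S' R' u []"
    proof
      assume ev0: "ev phi' u = 0"
      have "(\<Union>x\<in>set u. set (map fst (G (fst x)))) \<subseteq> S" using G1a uS by auto
      then have "set (map fst (lsub G u)) \<subseteq> S" using lsub_fst[of G u] by (rule order_trans[rotated])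
      moreover have "ev phi (lsub G u) = ev (\<lambda>h. ev phi (G h)) u" by (rule ev_lsub)
      moreover have "\<dots> = ev phi' u" by (rule ev_cong) (use uS G1b in auto)
      ultimately have "pres_eq S R (lsub G u) []" using iso ev0 unfolding presents_iso_def by metis
      then have "pres_eq S' R' (lsub F (lsub G u)) (lsub F [])"
        by (rule pres_eq_lsub) (use F2 Fpres in auto)
      then have 1: "pres_eq S' R' (lsub (\<lambda>h. lsub F (G h)) u) []" by (simp add: lsub_lsub)
      have "pres_eq S' R' (lsub (\<lambda>h. lsub F (G h)) u) u"
        using uS G1c G1d by (intro pres_eq_replace) auto
      then show "pres_eq S' R' u []" using 1 by (metis pres_eq_sym pres_eq_trans)
    next
      assume "pres_eq S' R' u []"
      then show "ev phi' u = 0" using ev_pres_eq[of S' R' u "[]" phi'] evR' by simp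
    qed
  qed
  show ?thesis using tp' iso' card by blast
qed



lemma bezout_set:
  fixes c :: "'a \<Rightarrow> int"
  assumes "finite A"
  shows "\<exists>x. (\<Sum>z\<in>A. x z * c z) = Gcd (c ` A)"
  using assms
proof (induction rule: finite_induct)
  case empty then show ?case by simp
next
  case (insert a A)
  obtain x where x: "(\<Sum>z\<in>A. x z * c z) = Gcd (c ` A)" using insert by blast
  obtain p q where pq: "p * c a + q * Gcd (c ` A) = gcd (c a) (Gcd (c ` A))" using bezout_int by blast
  define y where "y z = (if z = a then p else q * x z)" for z
  have "(\<Sum>z\<in>A. y z * c z) = (\<Sum>z\<in>A. q * (x z * c z))"
    using insert(2) by (intro sum.cong) (auto simp: y_def)
  also have "\<dots> = q * Gcd (c ` A)" by (simp add: sum_distrib_left[symmetric] x)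
  finally have "(\<Sum>z\<in>insert a A. y z * c z) = p * c a + q * Gcd (c ` A)"
    using insert(1,2) by (simp add: y_def)
  then show ?case using pq by (auto simp: Gcd_insert)
qed

lemma sum_list_zero: "(\<And>s. s \<in> set r \<Longrightarrow> f s = (0::'a::monoid_add)) \<Longrightarrow> sum_list (map f r) = 0"
  by (induction r) auto

lemma parallel_cyclic:
  fixes phi :: "'g \<Rightarrow> int^'n"
  assumes finT: "finite T" and ne: "g0 \<in> T"
    and par: "\<And>z w i j. z \<in> T \<Longrightarrow> w \<in> T \<Longrightarrow> phi z $ i * phi w $ j = phi z $ j * phi w $ i"
  shows "\<exists>v m x. (\<forall>z\<in>T. \<forall>i. phi z $ i = m z * v $ i) \<and> (\<Sum>z\<in>T. m z * x z) = 1"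
proof (cases "\<forall>z\<in>T. \<forall>i. phi z $ i = 0")
  case True
  define m :: "'g \<Rightarrow> int" where "m z = (if z = g0 then 1 else 0)" for z
  have "(\<Sum>z\<in>T. m z * m z) = 1" using finT ne by (simp add: m_def if_distrib cong: if_cong)
  then show ?thesis using True by (intro exI[of _ 0] exI[of _ m]) auto
next
  case False
  then obtain z1 j where z1: "z1 \<in> T" "phi z1 $ j \<noteq> 0" by blast
  define c where "c z = phi z $ j" for z
  define d where "d = Gcd (c ` T)"
  obtain x where x: "(\<Sum>z\<in>T. x z * c z) = d" using bezout_set[OF finT, of c] d_def by blast
  have d0: "d \<noteq> 0" using z1 by (auto simp: d_def Gcd_0_iff c_def)
  have ddvd: "d dvd c z" if "z \<in> T" for z using that by (simp add: d_def Gcd_dvd)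
  define v :: "int^'n" where "v = (\<chi> i. \<Sum>z\<in>T. x z * phi z $ i)"
  define m where "m z = c z div d" for z
  let ?u = "phi z1 $ j"
  have key: "phi w $ i * ?u = c w * phi z1 $ i" if "w \<in> T" for w i
    using par[OF that z1(1), of i j] by (simp add: c_def)
  have vu: "v $ i * ?u = d * phi z1 $ i" for i
  proof -
    have "v $ i * ?u = (\<Sum>z\<in>T. x z * (phi z $ i * ?u))" by (simp add: v_def sum_distrib_right mult.assoc)
    also have "\<dots> = (\<Sum>z\<in>T. (x z * c z) * phi z1 $ i)" by (rule sum.cong) (simp_all add: key)
    also have "\<dots> = d * phi z1 $ i" by (simp add: sum_distrib_right[symmetric] x)
    finally show ?thesis .
  qed
  have mc: "d * m z = c z" if "z \<in> T" for z using ddvd[OF that] by (simp add: m_def)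
  have 1: "phi z $ i = m z * v $ i" if "z \<in> T" for z i
  proof -
    have "m z * v $ i * ?u = m z * d * phi z1 $ i" by (simp add: mult.assoc vu)
    also have "\<dots> = c z * phi z1 $ i" using mc[OF that] by (simp add: mult.commute)
    also have "\<dots> = phi z $ i * ?u" using key[OF that] by simp
    finally show ?thesis using z1(2) by simp
  qed
  have "d * (\<Sum>z\<in>T. m z * x z) = (\<Sum>z\<in>T. x z * c z)"
    by (simp add: sum_distrib_left) (rule sum.cong, simp_all add: mc[symmetric] algebra_simps)
  then have 2: "(\<Sum>z\<in>T. m z * x z) = 1" using x d0 by simp
  show ?thesis using 1 2 by blast
qed

lemma real_vec_nth[simp]: "real_vec v $ i = real_of_int (v $ i)" by (simp add: real_vec_def)

lemma dim_le1_parallel: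
  assumes "dim ((\<lambda>g. real_vec (phi g)) ` T) \<le> 1" "z \<in> T" "w \<in> T"
  shows "phi z $ i * phi w $ j = phi z $ j * phi w $ i"
proof -
  let ?V = "(\<lambda>g. real_vec (phi g)) ` T"
  obtain B where B: "B \<subseteq> ?V" "independent B" "?V \<subseteq> span B" "card B = dim ?V"
    by (rule basis_exists)
  have "finite B" using B(2) by (rule independent_bound_general[THEN conjunct1])
  have "card B \<le> Suc 0" using B(4) assms(1) by simp
  then have Ball: "\<forall>a\<in>B. \<forall>b\<in>B. a = b" using card_le_Suc0_iff_eq[OF \<open>finite B\<close>] by blast
  obtain b where "B \<subseteq> {b}"
  proof (cases "B = {}")
    case True then show ?thesis using that by blast
  next
    case False then obtain b where "b \<in> B" by blast
    then show ?thesis using that Ball by blast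
  qed
  then have V: "?V \<subseteq> span {b}" using B(3) span_mono by blast
  obtain cz cw where ez: "real_vec (phi z) = cz *\<^sub>R b" and ew: "real_vec (phi w) = cw *\<^sub>R b"
  proof -
    have "real_vec (phi z) \<in> span {b}" "real_vec (phi w) \<in> span {b}" using V assms(2,3) by auto
    then show ?thesis using that unfolding span_singleton by blast
  qed
  have hz: "real_of_int (phi z $ k) = cz * b $ k" for k
    using arg_cong[OF ez, of "\<lambda>v. v $ k"] by simp
  have hw: "real_of_int (phi w $ k) = cw * b $ k" for k
    using arg_cong[OF ew, of "\<lambda>v. v $ k"] by simp
  have "real_of_int (phi z $ i * phi w $ j) = real_of_int (phi z $ j * phi w $ i)"
    unfolding of_int_mult hz hw by simp
  then show ?thesis by (simp only: of_int_eq_iff)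
qed



lemma free_eq_ev: "free_eq u v \<Longrightarrow> ev psi u = ev psi v"
  unfolding free_eq_def
proof (induction rule: equivclp_induct)
  case base then show ?case by simp
next
  case (step y z)
  have "ev psi y = ev psi z" if "free_step a b" "{a,b} = {y,z}" for a b
    using that(1) unfolding free_step_def using that(2)
    by (auto simp: inv_letter_def doubleton_eq_iff)
  then have "ev psi y = ev psi z" using step.hyps(2) by blast
  then show ?case using step.IH by simp
qed

lemma free_conj_ev: "free_conj u v \<Longrightarrow> ev psi u = ev psi v"
  unfolding free_conj_def using free_eq_ev by fastforce

lemma ev_zero_fun: "ev (\<lambda>_. 0) u = 0" by (induction u) auto

lemma sum_list_single:
  assumes "distinct (map fst w)" "s0 \<in> set w"
  shows "(\<Sum>s\<leftarrow>w. (if fst s = fst s0 then snd s else (0::int))) = snd s0"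
  using assms
proof (induction w)
  case Nil then show ?case by simp
next
  case (Cons s w)
  show ?case
  proof (cases "s = s0")
    case True
    then have "(\<Sum>s\<leftarrow>w. (if fst s = fst s0 then snd s else (0::int))) = 0"
    proof (intro sum_list_zero)
      fix t assume "t \<in> set w"
      then have "fst t \<noteq> fst s0" using Cons.prems True by (auto simp: image_iff)
      then show "(if fst t = fst s0 then snd t else 0) = 0" by simp
    qed
    then show ?thesis using True by simp
  next
    case False
    then have "s0 \<in> set w" using Cons.prems by auto
    then have "fst s \<noteq> fst s0" using Cons.prems by auto
    then show ?thesis using Cons False \<open>s0 \<in> set w\<close> by simp
  qed
qed

lemma list_le3: "xs \<noteq> [] \<Longrightarrow> length xs \<le> 3 \<Longrightarrow>
   (\<exists>a. xs = [a]) \<or> (\<exists>a b. xs = [a, b]) \<or> (\<exists>a b c. xs = [a, b, c])"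
  by (auto simp: length_Suc_conv le_Suc_eq numeral_3_eq_3)

theorem mainTheorem11:
  fixes S :: "'g set" and R :: "'g sylword set" and phi :: "'g \<Rightarrow> int^'n"
  assumes "three_presentation S R"
    and "presents_iso S R phi"
    and "\<forall>(S' :: nat set) R' (phi' :: nat \<Rightarrow> int^'n).
           three_presentation S' R' \<and> presents_iso S' R' phi' \<longrightarrow> card S \<le> card S'"
  shows "\<forall>r\<in>R. \<forall>w. nf_of r w \<and> w \<noteq> [] \<longrightarrow>
           length w = 3 \<and> set (map fst w) \<subseteq> S \<and> gen_dim phi (set (map fst w)) = 2"
proof (intro ballI allI impI)
  note tp = assms(1) and iso = assms(2) and mini = assms(3)
  have finS: "finite S" and Rl: "\<And>r. r \<in> R \<Longrightarrow> length r \<le> 3 \<and> set (map fst r) \<subseteq> S"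
    using tp by (auto simp: three_presentation_def)
  have contra: False if T: "T \<subseteq> S" "g0 \<in> T" "g1 \<in> T" "g0 \<noteq> g1"
     and par: "\<And>z w i j. z \<in> T \<Longrightarrow> w \<in> T \<Longrightarrow> phi z $ i * phi w $ j = phi z $ j * phi w $ i" for T g0 g1
  proof -
    have "finite T" using T(1) finS finite_subset by blast
    from parallel_cyclic[of T g0 phi, OF \<open>finite T\<close> T(2) par]
    obtain v m x where vm: "\<forall>z\<in>T. \<forall>i. phi z $ i = m z * v $ i" and mx: "(\<Sum>z\<in>T. m z * x z) = 1"
      by blast
    have vm': "\<And>z i. z \<in> T \<Longrightarrow> phi z $ i = m z * v $ i" using vm by blast
    from merge[where m=m and v=v and x=x, OF tp iso T vm' mx]
    obtain S' :: "nat set" and R' and phi' :: "nat \<Rightarrow> int^'n"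
      where A: "three_presentation S' R'" "presents_iso S' R' phi'" "card S' < card S"
      by blast
    have "card S \<le> card S'" using mini A(1,2) by blast
    then show False using A(3) by simp
  qed
  have zero: False if g: "g \<in> S" "phi g = 0" for g
  proof (cases "\<exists>h\<in>S. h \<noteq> g")
    case True then obtain h where h: "h \<in> S" "h \<noteq> g" by blast
    have g0: "phi g $ i = 0" for i using g(2) by simp
    have par: "phi z $ i * phi w $ j = phi z $ j * phi w $ i" if "z \<in> {g,h}" "w \<in> {g,h}" for z w i j
      using that by (auto simp: g0)
    show False by (rule contra[of "{g,h}" g h, OF _ _ _ _ par]) (use g h in auto)
  next
    case False
    obtain u where u: "set (map fst u) \<subseteq> S" "ev phi u = (\<chi> i. 1)" using iso unfolding presents_iso_def by blast
    have "\<forall>x\<in>set u. fst x = g" using u(1) False by auto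
    then have "ev phi u = ev (\<lambda>_. 0) u" using g(2) by (intro ev_cong) auto
    then have "(\<chi> i. (1::int)) = (0::int^'n)" using u(2) ev_zero_fun by simp
    then have "(\<chi> i. (1::int)) $ (undefined::'n) = (0::int^'n) $ undefined" by simp
    then show False by simp
  qed
  fix r w assume r: "r \<in> R" and hw: "nf_of r w \<and> w \<noteq> []"
  have dist: "distinct (map fst w)" and nz: "\<And>s. s \<in> set w \<Longrightarrow> snd s \<noteq> 0"
    and conj: "free_conj (expand r) (expand w)" and wne: "w \<noteq> []"
    using hw by (auto simp: nf_of_def normal_form_def)
  have evc: "ev psi (expand r) = ev psi (expand w)" for psi :: "'g \<Rightarrow> int^'n"
    using free_conj_ev[OF conj] .
  have sub: "set (map fst w) \<subseteq> set (map fst r)"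
  proof
    fix z assume "z \<in> set (map fst w)"
    then obtain s0 where s0: "s0 \<in> set w" "fst s0 = z" by auto
    define psi :: "'g \<Rightarrow> int^'n" where "psi y = (if y = z then (\<chi> i. 1) else 0)" for y
    fix i :: 'n
    have "ev psi (expand w) $ i = (\<Sum>s\<leftarrow>w. (if fst s = fst s0 then snd s else 0))"
      unfolding ev_expand by (rule arg_cong[where f=sum_list], rule map_cong) (auto simp: psi_def s0(2))
    also have "\<dots> = snd s0" using sum_list_single[OF dist s0(1)] .
    finally have 1: "ev psi (expand w) $ i = snd s0" .
    show "z \<in> set (map fst r)"
    proof (rule ccontr)
      assume nz': "z \<notin> set (map fst r)"
      have "ev psi (expand r) $ i = 0" unfolding ev_expand
        by (rule sum_list_zero) (use nz' in \<open>auto simp: psi_def image_iff\<close>)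
      then have "snd s0 = 0" using 1 evc[of psi] by simp
      then show False using nz[OF s0(1)] by simp
    qed
  qed
  have wS: "set (map fst w) \<subseteq> S" using sub Rl[OF r] by blast
  have "length w = card (set (map fst w))" using distinct_card[OF dist] by simp
  also have "\<dots> \<le> card (set (map fst r))" using sub by (intro card_mono) auto
  also have "\<dots> \<le> length (map fst r)" by (rule card_length)
  also have "\<dots> \<le> 3" using Rl[OF r] by simp
  finally have len: "length w \<le> 3" .
  have rel: "(\<Sum>s\<leftarrow>w. snd s * phi (fst s) $ i) = 0" for i
    using evc[of phi] iso_rel_ev[OF tp iso r] ev_expand[of phi w i] by simp
  consider (1) g a where "w = [(g, a)]" | (2) g a h b where "w = [(g, a), (h, b)]"
    | (3) g a h b k c where "w = [(g, a), (h, b), (k, c)]"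
    using list_le3[OF wne len] by auto
  then show "length w = 3 \<and> set (map fst w) \<subseteq> S \<and> gen_dim phi (set (map fst w)) = 2"
  proof cases
    case 1
    have "a \<noteq> 0" using nz 1 by auto
    then have "phi g = 0" using rel 1 by (simp add: vec_eq_iff)
    moreover have "g \<in> S" using wS 1 by simp
    ultimately show ?thesis using zero by blast
  next
    case 2
    have ab: "a \<noteq> 0" "b \<noteq> 0" "g \<noteq> h" using nz[of "(g,a)"] nz[of "(h,b)"] dist 2 by auto
    have e: "a * phi g $ k = - (b * phi h $ k)" for k using rel[of k] 2 by simp
    have par2: "phi g $ i * phi h $ j = phi g $ j * phi h $ i" for i j
    proof -
      have "a * (phi g $ i * phi h $ j) = (a * phi g $ i) * phi h $ j" by (simp add: mult.assoc)
      also have "\<dots> = - (b * phi h $ i) * phi h $ j" by (simp add: e)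
      also have "\<dots> = - (b * phi h $ j) * phi h $ i" by (simp add: algebra_simps)
      also have "\<dots> = (a * phi g $ j) * phi h $ i" by (simp add: e)
      finally show ?thesis using ab(1) by (simp add: mult.assoc)
    qed
    have "g \<in> S" "h \<in> S" using wS 2 by auto
    then have False
      by (intro contra[of "{g,h}" g h]) (use ab par2 in \<open>auto simp: mult.commute\<close>)
    then show ?thesis ..
  next
    case 3
    have abc: "a \<noteq> 0" "b \<noteq> 0" "c \<noteq> 0" "g \<noteq> h" "g \<noteq> k" "h \<noteq> k" using nz[of "(g,a)"] nz[of "(h,b)"] nz[of "(k,c)"] dist 3 by auto
    have gS: "g \<in> S" "h \<in> S" "k \<in> S" using wS 3 by auto
    let ?A = "real_vec (phi g)" and ?B = "real_vec (phi h)" and ?C = "real_vec (phi k)"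
    have V: "(\<lambda>g. real_vec (phi g)) ` set (map fst w) = {?A, ?B, ?C}" using 3 by auto
    have C: "?C = (- (a / c)) *\<^sub>R ?A + (- (b / c)) *\<^sub>R ?B"
    proof (rule vec_eq_iff[THEN iffD2], rule allI)
      fix i
      have "a * phi g $ i + b * phi h $ i + c * phi k $ i = 0" using rel[of i] 3 by simp
      then have "real_of_int a * real_of_int (phi g $ i) + real_of_int b * real_of_int (phi h $ i)
          + real_of_int c * real_of_int (phi k $ i) = 0"
        by (metis of_int_0 of_int_add of_int_mult)
      then show "?C $ i = ((- (a / c)) *\<^sub>R ?A + (- (b / c)) *\<^sub>R ?B) $ i"
        using abc(3) by (simp add: field_simps)
    qed
    have "?C \<in> span {?A, ?B}" unfolding C
      by (intro span_add span_scale span_base) auto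
    then have "{?A, ?B, ?C} \<subseteq> span {?A, ?B}" by (auto intro: span_base)
    then have "dim {?A, ?B, ?C} \<le> dim {?A, ?B}" by (rule dim_mono)
    also have "\<dots> \<le> card {?A, ?B}" by (rule dim_le_card') simp
    also have "\<dots> \<le> 2" by (cases "?A = ?B") auto
    finally have le2: "dim {?A, ?B, ?C} \<le> 2" .
    have ge2: "\<not> dim {?A, ?B, ?C} \<le> 1"
    proof
      assume d1: "dim {?A, ?B, ?C} \<le> 1"
      have d1': "dim ((\<lambda>g. real_vec (phi g)) ` {g, h, k}) \<le> 1" using d1 by simp
      show False
        by (rule contra[of "{g,h,k}" g h]) (use gS abc dim_le1_parallel[OF d1'] in auto)
    qed
    show ?thesis using 3 gS le2 ge2 unfolding gen_dim_def V by auto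
  qed
qed

end
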